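(* Suppose that $\|\tilde{\mu}_{m}-\mu\|_\infty=\mathcal{O}_{\mathrm{P}}(a_m)$ and $\|\tilde{\pi}_{m}-\pi\|_\infty=\mathcal{O}_{\mathrm{P}}(a_m)$ for sufficiently large $m$, where $\{a_m\}$ is a deterministic sequence with $a_m\to 0$. Suppose in addition that, for sufficiently large $m$ and conditionally on $\tilde{\mu}_{m}(\cdot)$, the joint density $b_m(x,u)$ of $(\mu(Z),\eta_m(Z))$, where $\eta_m=a_m^{-1}(\tilde{\mu}_{m}-\mu)$, and its partial derivatives $\partial_x b_m(x,u)$, $\partial_x^2 b_m(x,u)$ exist for all $x,u$ and there are non-negative functions $\bar b_{m,i}(u)$, $i=0,1,2$, with $b_m(x,u)\le \bar b_{m,0}(u)$, $|\partial_x b_m(x,u)|\le \bar b_{m,1}(u)$, $|\partial_x^2 b_m(x,u)|\le \bar b_{m,2}(u)$ for all $x,u$ and $\sup_m\int_{\mathbb{R}}|u|^r\bar b_{m,i}(u)\,du<\infty$ for $r=0,1,2,3$ and $i=0,1,2$. Suppose also that $f_\mu(q)>0$. Then $\mathcal{F}_q[\tilde{\mu}_{m}]-\mathcal{F}_q[\mu]=\mathcal{O}_{\mathrm{P}}(a_m)$.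
   Context: $Z$ denotes the risk factors, $\mu(z)=\mathrm{E}[X\mid Z=z]$, $\pi(z)=\mathrm{E}[Y\mid Z=z]$, and $\tilde{\mu}_{m},\tilde{\pi}_{m}$ are first-stage fitted approximations from $m$ outer-level scenarios. $\|\cdot\|_\infty$ is the essential supremum norm. $q$ is the $\alpha$-VaR of $\mu(Z)$ and $f_\mu$ the density of $\mu(Z)$. For a function $g$, the functional $\mathcal{F}_x[g]$ is the distribution function of $g(Z)$ at $x$, conditional on the fitted functions: $\mathcal{F}_x[g]=\mathrm{Pr}_m\{g(Z)\le x\}$; thus $\mathcal{F}_q[\mu]=\Pr\{\mu(Z)\le q\}$ and $\mathcal{F}_q[\tilde{\mu}_{m}]=\mathrm{Pr}_m\{\tilde{\mu}_{m}(Z)\le q\}$. *)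

theory Defs
  imports "HOL-Probability.Probability"
begin

text \<open>Big-O in probability (inner-probability form, robust to measurability):
  X m = O_P(a m) iff for every eps > 0 there are C, N such that for all m \<ge> N
  there is an event of probability at least 1 - eps on which |X m| \<le> C * a m.\<close>
definition big_OP :: "'w measure \<Rightarrow> (nat \<Rightarrow> 'w \<Rightarrow> ereal) \<Rightarrow> (nat \<Rightarrow> real) \<Rightarrow> bool" where
  "big_OP M X a \<longleftrightarrow>
     (\<forall>\<epsilon>>0. \<exists>C N. \<forall>m\<ge>N. \<exists>A\<in>sets M. measure M A \<ge> 1 - \<epsilon> \<and>
        (\<forall>\<omega>\<in>A. \<bar>X m \<omega>\<bar> \<le> ereal (C * a m)))"

definition sup_norm :: "'z measure \<Rightarrow> ('z \<Rightarrow> real) \<Rightarrow> ereal" where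
  "sup_norm D g = esssup D (\<lambda>z. ereal \<bar>g z\<bar>)"

text \<open>Distribution function F_x[g] = Pr{g(Z) \<le> x}, Z having law D.\<close>
definition cdf_at :: "'z measure \<Rightarrow> ('z \<Rightarrow> real) \<Rightarrow> real \<Rightarrow> real" where
  "cdf_at D g x = measure D {z \<in> space D. g z \<le> x}"

definition VaR :: "'z measure \<Rightarrow> ('z \<Rightarrow> real) \<Rightarrow> real \<Rightarrow> real" where
  "VaR D g \<alpha> = Inf {x. cdf_at D g x \<ge> \<alpha>}"

end

theory Submission
  imports Defs
begin

lemma dens_bound:
  fixes mu g :: "'z \<Rightarrow> real" and b :: "real \<Rightarrow> real \<Rightarrow> real" and bb :: "real \<Rightarrow> real"
  assumes D: "prob_space D"
    and dist: "distributed D (lborel :: (real \<times> real) measure) (\<lambda>z. (mu z, g z)) (\<lambda>(x, u). ennreal (b x u))"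
    and bnd: "\<And>x u. b x u \<le> bb u"
    and int: "(\<integral>\<^sup>+ u. ennreal (\<bar>u\<bar> ^ 0 * bb u) \<partial>lborel) \<le> ennreal B"
    and st: "s \<le> t"
  shows "measure D {z\<in>space D. s < mu z \<and> mu z \<le> t} \<le> max B 0 * (t - s)"
proof -
  interpret prob_space D by fact
  let ?A = "{s<..t} \<times> (UNIV :: real set)"
  have Am: "?A \<in> sets (lborel :: (real \<times> real) measure)" unfolding lborel_prod[symmetric] by (intro pair_measureI) auto
  have pre: "(\<lambda>z. (mu z, g z)) -` ?A \<inter> space D = {z\<in>space D. s < mu z \<and> mu z \<le> t}" by auto
  have fm: "(\<lambda>(x, u). ennreal (b x u)) \<in> borel_measurable (lborel :: (real \<times> real) measure)"
    using dist by (simp add: distributed_def)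
  have "emeasure D {z\<in>space D. s < mu z \<and> mu z \<le> t}
      = (\<integral>\<^sup>+p. (\<lambda>(x, u). ennreal (b x u)) p * indicator ?A p \<partial>(lborel :: (real \<times> real) measure))"
    using distributed_emeasure[OF dist Am] pre by simp
  also have "\<dots> = (\<integral>\<^sup>+p. (\<lambda>(x, u). ennreal (b x u)) p * indicator ?A p \<partial>(lborel \<Otimes>\<^sub>M lborel))"
    by (simp add: lborel_prod)
  also have "\<dots> = (\<integral>\<^sup>+x. \<integral>\<^sup>+u. ennreal (b x u) * indicator ?A (x, u) \<partial>lborel \<partial>lborel)"
  proof (subst lborel.nn_integral_fst[symmetric])
    have "(\<lambda>p. (\<lambda>(x, u). ennreal (b x u)) p * indicator ?A p) \<in> borel_measurable (lborel :: (real \<times> real) measure)"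
      by (intro borel_measurable_times_ennreal fm borel_measurable_indicator Am)
    then show "(\<lambda>p. (\<lambda>(x, u). ennreal (b x u)) p * indicator ?A p) \<in> borel_measurable (lborel \<Otimes>\<^sub>M lborel)"
      by (simp only: lborel_prod)
  qed simp
  also have "\<dots> \<le> (\<integral>\<^sup>+x. ennreal B * indicator {s<..t} x \<partial>lborel)"
  proof (rule nn_integral_mono)
    fix x :: real
    have "(\<integral>\<^sup>+u. ennreal (b x u) * indicator ?A (x, u) \<partial>lborel)
        \<le> (\<integral>\<^sup>+u. ennreal (\<bar>u\<bar> ^ 0 * bb u) * indicator {s<..t} x \<partial>lborel)"
      by (rule nn_integral_mono) (auto simp: indicator_def intro: ennreal_leI bnd)
    also have "\<dots> \<le> ennreal B * indicator {s<..t} x"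
      using int by (cases "x \<in> {s<..t}") auto
    finally show "(\<integral>\<^sup>+u. ennreal (b x u) * indicator ?A (x, u) \<partial>lborel) \<le> ennreal B * indicator {s<..t} x" .
  qed
  also have "\<dots> = ennreal B * ennreal (t - s)"
    by (subst nn_integral_cmult_indicator) (use st in auto)
  also have "\<dots> = ennreal (max B 0 * (t - s))"
    by (smt (verit) ennreal_mult' ennreal_neg mult_eq_0_iff st)
  finally have "emeasure D {z\<in>space D. s < mu z \<and> mu z \<le> t} \<le> ennreal (max B 0 * (t - s))" .
  then show ?thesis
    using st by (simp add: emeasure_eq_measure ennreal_le_iff)
qed

lemma cdf_close:
  fixes mu h :: "'z \<Rightarrow> real"
  assumes D: "prob_space D" and mm: "mu \<in> borel_measurable D" and hm: "h \<in> borel_measurable D"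
    and Kd: "\<And>s t. s \<le> t \<Longrightarrow> measure D {z\<in>space D. s < mu z \<and> mu z \<le> t} \<le> K * (t - s)"
    and c: "c \<ge> 0" and close: "AE z in D. \<bar>h z - mu z\<bar> \<le> c"
  shows "\<bar>cdf_at D h q - cdf_at D mu q\<bar> \<le> K * (2 * c)"
proof -
  interpret prob_space D by fact
  have split: "measure D {z\<in>space D. mu z \<le> t} = measure D {z\<in>space D. mu z \<le> s}
      + measure D {z\<in>space D. s < mu z \<and> mu z \<le> t}" if "s \<le> t" for s t
  proof -
    have "{z\<in>space D. mu z \<le> t} = {z\<in>space D. mu z \<le> s} \<union> {z\<in>space D. s < mu z \<and> mu z \<le> t}"
      using that by auto
    moreover have "measure D ({z\<in>space D. mu z \<le> s} \<union> {z\<in>space D. s < mu z \<and> mu z \<le> t})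
       = measure D {z\<in>space D. mu z \<le> s} + measure D {z\<in>space D. s < mu z \<and> mu z \<le> t}"
      by (rule finite_measure_Union) (use mm in auto)
    ultimately show ?thesis by simp
  qed
  have up: "cdf_at D h q \<le> measure D {z\<in>space D. mu z \<le> q + c}"
    unfolding cdf_at_def
    by (rule finite_measure_mono_AE) (use close mm in \<open>auto elim!: eventually_mono\<close>)
  have lo: "measure D {z\<in>space D. mu z \<le> q - c} \<le> cdf_at D h q"
    unfolding cdf_at_def
    by (rule finite_measure_mono_AE) (use close hm in \<open>auto elim!: eventually_mono\<close>)
  have "measure D {z\<in>space D. mu z \<le> q + c} \<le> cdf_at D mu q + K * c"
    using split[of q "q + c"] Kd[of q "q + c"] c by (simp add: cdf_at_def)
  moreover have "cdf_at D mu q - K * c \<le> measure D {z\<in>space D. mu z \<le> q - c}"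
    using split[of "q - c" q] Kd[of "q - c" q] c by (simp add: cdf_at_def)
  moreover have "K * c \<ge> 0"
    using Kd[of q "q + c"] c measure_nonneg[of D] by (smt (verit))
  ultimately show ?thesis using up lo by (simp add: abs_le_iff)
qed

theorem lemma2:
  fixes M :: "'w measure" and D :: "'z measure"
    and mu piZ :: "'z \<Rightarrow> real"
    and mut pit :: "nat \<Rightarrow> 'w \<Rightarrow> 'z \<Rightarrow> real"
    and a :: "nat \<Rightarrow> real" and \<alpha> q :: real and f_mu :: "real \<Rightarrow> real"
    and b b1 b2 :: "nat \<Rightarrow> 'w \<Rightarrow> real \<Rightarrow> real \<Rightarrow> real"
    and bb :: "nat \<Rightarrow> nat \<Rightarrow> 'w \<Rightarrow> real \<Rightarrow> real"
  assumes M: "prob_space M" and D: "prob_space D"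
    and meas_mu: "mu \<in> borel_measurable D" and meas_pi: "piZ \<in> borel_measurable D"
    and meas_mut: "\<And>m \<omega>. mut m \<omega> \<in> borel_measurable D"
    and meas_pit: "\<And>m \<omega>. pit m \<omega> \<in> borel_measurable D"
    and a_pos: "\<And>m. a m > 0" and a_lim: "a \<longlonglongrightarrow> 0"
    and rate_mu: "big_OP M (\<lambda>m \<omega>. sup_norm D (\<lambda>z. mut m \<omega> z - mu z)) a"
    and rate_pi: "big_OP M (\<lambda>m \<omega>. sup_norm D (\<lambda>z. pit m \<omega> z - piZ z)) a"
    and alpha: "0 < \<alpha>" "\<alpha> < 1" and q_def: "q = VaR D mu \<alpha>"
    and f_mu: "distributed D lborel mu (\<lambda>x. ennreal (f_mu x))" and f_mu_pos: "f_mu q > 0"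
    and dens: "\<exists>N (B::real). \<forall>m\<ge>N. AE \<omega> in M.
        distributed D (lborel :: (real \<times> real) measure)
          (\<lambda>z. (mu z, (mut m \<omega> z - mu z) / a m)) (\<lambda>(x, u). ennreal (b m \<omega> x u))
      \<and> (\<forall>x u. ((\<lambda>x. b m \<omega> x u) has_real_derivative b1 m \<omega> x u) (at x)
               \<and> ((\<lambda>x. b1 m \<omega> x u) has_real_derivative b2 m \<omega> x u) (at x)
               \<and> 0 \<le> b m \<omega> x u \<and> b m \<omega> x u \<le> bb 0 m \<omega> u
               \<and> \<bar>b1 m \<omega> x u\<bar> \<le> bb 1 m \<omega> u \<and> \<bar>b2 m \<omega> x u\<bar> \<le> bb 2 m \<omega> u)
      \<and> (\<forall>i\<le>2. \<forall>u. 0 \<le> bb i m \<omega> u)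
      \<and> (\<forall>i\<le>2. \<forall>r\<le>(3::nat).
            (\<integral>\<^sup>+ u. ennreal (\<bar>u\<bar> ^ r * bb i m \<omega> u) \<partial>lborel) \<le> ennreal B)"
  shows "big_OP M (\<lambda>m \<omega>. ereal (cdf_at D (mut m \<omega>) q - cdf_at D mu q)) a"
proof -
  interpret Mp: prob_space M by fact
  interpret Dp: prob_space D by fact
  obtain N0 and B :: real where hB: "\<forall>m\<ge>N0. AE \<omega> in M.
        distributed D (lborel :: (real \<times> real) measure)
          (\<lambda>z. (mu z, (mut m \<omega> z - mu z) / a m)) (\<lambda>(x, u). ennreal (b m \<omega> x u))
      \<and> (\<forall>x u. ((\<lambda>x. b m \<omega> x u) has_real_derivative b1 m \<omega> x u) (at x)
               \<and> ((\<lambda>x. b1 m \<omega> x u) has_real_derivative b2 m \<omega> x u) (at x)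
               \<and> 0 \<le> b m \<omega> x u \<and> b m \<omega> x u \<le> bb 0 m \<omega> u
               \<and> \<bar>b1 m \<omega> x u\<bar> \<le> bb 1 m \<omega> u \<and> \<bar>b2 m \<omega> x u\<bar> \<le> bb 2 m \<omega> u)
      \<and> (\<forall>i\<le>2. \<forall>u. 0 \<le> bb i m \<omega> u)
      \<and> (\<forall>i\<le>2. \<forall>r\<le>(3::nat).
            (\<integral>\<^sup>+ u. ennreal (\<bar>u\<bar> ^ r * bb i m \<omega> u) \<partial>lborel) \<le> ennreal B)"
    using dens by blast
  note ev = hB[rule_format, OF order_refl]
  have "\<exists>\<omega>. distributed D (lborel :: (real \<times> real) measure)
          (\<lambda>z. (mu z, (mut N0 \<omega> z - mu z) / a N0)) (\<lambda>(x, u). ennreal (b N0 \<omega> x u))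
      \<and> (\<forall>x u. b N0 \<omega> x u \<le> bb 0 N0 \<omega> u)
      \<and> (\<integral>\<^sup>+ u. ennreal (\<bar>u\<bar> ^ 0 * bb 0 N0 \<omega> u) \<partial>lborel) \<le> ennreal B"
  proof (rule ccontr)
    assume nex: "\<not> ?thesis"
    have "AE \<omega> in M. False"
      using ev by (rule eventually_mono) (use nex in blast)
    then show False by (simp add: Mp.AE_False)
  qed
  then obtain \<omega>0 where
    d0: "distributed D (lborel :: (real \<times> real) measure)
          (\<lambda>z. (mu z, (mut N0 \<omega>0 z - mu z) / a N0)) (\<lambda>(x, u). ennreal (b N0 \<omega>0 x u))"
    and b0: "\<And>x u. b N0 \<omega>0 x u \<le> bb 0 N0 \<omega>0 u"
    and i0: "(\<integral>\<^sup>+ u. ennreal (\<bar>u\<bar> ^ 0 * bb 0 N0 \<omega>0 u) \<partial>lborel) \<le> ennreal B"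
    by blast
  define K where "K = max B 0"
  have Kd: "measure D {z\<in>space D. s < mu z \<and> mu z \<le> t} \<le> K * (t - s)" if "s \<le> t" for s t
    unfolding K_def by (rule dens_bound[OF D d0 b0 i0 that])
  show ?thesis
    unfolding big_OP_def
  proof (intro allI impI)
    fix \<epsilon> :: real assume "\<epsilon> > 0"
    then obtain C N where CN: "\<forall>m\<ge>N. \<exists>A\<in>sets M. measure M A \<ge> 1 - \<epsilon> \<and>
        (\<forall>\<omega>\<in>A. \<bar>sup_norm D (\<lambda>z. mut m \<omega> z - mu z)\<bar> \<le> ereal (C * a m))"
      using rate_mu unfolding big_OP_def by blast
    show "\<exists>C N. \<forall>m\<ge>N. \<exists>A\<in>sets M. 1 - \<epsilon> \<le> Sigma_Algebra.measure M A \<and>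
        (\<forall>\<omega>\<in>A. \<bar>ereal (cdf_at D (mut m \<omega>) q - cdf_at D mu q)\<bar> \<le> ereal (C * a m))"
    proof (intro exI allI impI)
      fix m assume "N \<le> m"
      then obtain A where A: "A \<in> sets M" "measure M A \<ge> 1 - \<epsilon>"
        and hA: "\<And>\<omega>. \<omega> \<in> A \<Longrightarrow> \<bar>sup_norm D (\<lambda>z. mut m \<omega> z - mu z)\<bar> \<le> ereal (C * a m)"
        using CN by blast
      show "\<exists>A\<in>sets M. 1 - \<epsilon> \<le> Sigma_Algebra.measure M A \<and>
        (\<forall>\<omega>\<in>A. \<bar>ereal (cdf_at D (mut m \<omega>) q - cdf_at D mu q)\<bar> \<le> ereal ((K * (2 * max C 0)) * a m))"
      proof (intro bexI conjI ballI)
        fix \<omega> assume "\<omega> \<in> A"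
        have "sup_norm D (\<lambda>z. mut m \<omega> z - mu z) \<le> ereal (max C 0 * a m)"
        proof -
          have "sup_norm D (\<lambda>z. mut m \<omega> z - mu z) \<le> \<bar>sup_norm D (\<lambda>z. mut m \<omega> z - mu z)\<bar>"
            by (cases "sup_norm D (\<lambda>z. mut m \<omega> z - mu z)") auto
          also have "\<dots> \<le> ereal (C * a m)" by (rule hA) fact
          also have "\<dots> \<le> ereal (max C 0 * a m)"
            using a_pos[of m] by (simp add: mult_right_mono)
          finally show ?thesis .
        qed
        then have "AE z in D. ereal \<bar>mut m \<omega> z - mu z\<bar> \<le> ereal (max C 0 * a m)"
          using esssup_AE[of "\<lambda>z. ereal \<bar>mut m \<omega> z - mu z\<bar>" D] unfolding sup_norm_def
          by (auto elim!: eventually_mono) (metis ereal_less_eq(3) order_trans)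
        then have cl: "AE z in D. \<bar>mut m \<omega> z - mu z\<bar> \<le> max C 0 * a m"
          by simp
        have "\<bar>cdf_at D (mut m \<omega>) q - cdf_at D mu q\<bar> \<le> K * (2 * (max C 0 * a m))"
          by (rule cdf_close[OF D meas_mu meas_mut Kd _ cl]) (use a_pos[of m] in auto)
        then show "\<bar>ereal (cdf_at D (mut m \<omega>) q - cdf_at D mu q)\<bar> \<le> ereal ((K * (2 * max C 0)) * a m)"
          by (simp add: mult.assoc)
      qed (use A in auto)
    qed
  qed
qed

end
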